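(* Let $1\le p<\infty$ and let $n\ge m\ge 0$ be integers with $n-m\equiv 0\pmod 2$. Then $$\left[\sum_{i=0}^{\frac{n-m-2}{2}}2\binom{n}{i}^p+\sum_{i=0}^{m}\left[\binom{m}{i}+\binom{n}{\frac{n-m}{2}+i}\right]^p\right]^{1/p} \le \Big[\sum_{i=0}^{n}\binom{n}{i}^p\Big]^{1/p}+\Big[\sum_{i=0}^{m}\binom{m}{i}^p\Big]^{1/p},$$ where the first sum on the left is empty (zero) when $n=m$.
   Context: Binomial coefficients have their usual meaning. *)

theory Defs
  imports Complex_Main
begin

end

theory Submission
  imports Defs "HOL-Analysis.Analysis"
begin

lemma cvx:
  fixes x y t p :: real
  assumes "x \<ge> 0" "y \<ge> 0" "0 \<le> t" "t \<le> 1" "p \<ge> 1"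
  shows "((1-t)*x+t*y) powr p \<le> (1-t)*x powr p + t * y powr p"
proof -
  have tp: "s powr p \<le> s" if "0 \<le> s" "s \<le> 1" for s :: real
  proof (cases "s = 0")
    case False
    then have "s powr p \<le> s powr 1" using that assms(5) by (intro powr_mono') auto
    then show ?thesis using that by simp
  qed (use assms in simp)
  show ?thesis
  proof (cases "x = 0")
    case True
    have "(t*y) powr p = t powr p * y powr p" using assms by (simp add: powr_mult)
    also have "\<dots> \<le> t * y powr p" using tp[of t] assms by (intro mult_right_mono) auto
    finally show ?thesis using True assms by simp
  next
    case xn: False
    show ?thesis
    proof (cases "y = 0")
      case True
      have "((1-t)*x) powr p = (1-t) powr p * x powr p" using assms by (simp add: powr_mult)
      also have "\<dots> \<le> (1-t) * x powr p" using tp[of "1-t"] assms by (intro mult_right_mono) auto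
      finally show ?thesis using True assms by simp
    next
      case False
      have "x \<in> {0<..}" "y \<in> {0<..}" using xn False assms by auto
      from convex_onD[OF powr_convex[OF assms(5)] assms(3,4) this]
      show ?thesis by simp
    qed
  qed
qed

lemma minkowski:
  fixes a b :: "'a \<Rightarrow> real" and p :: real
  assumes "finite S" "\<And>i. i \<in> S \<Longrightarrow> a i \<ge> 0" "\<And>i. i \<in> S \<Longrightarrow> b i \<ge> 0" "p \<ge> 1"
  shows "(\<Sum>i\<in>S. (a i + b i) powr p) powr (1/p)
     \<le> (\<Sum>i\<in>S. a i powr p) powr (1/p) + (\<Sum>i\<in>S. b i powr p) powr (1/p)"
proof -
  define SA where "SA = (\<Sum>i\<in>S. a i powr p)"
  define SB where "SB = (\<Sum>i\<in>S. b i powr p)"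
  define A where "A = SA powr (1/p)"
  define B where "B = SB powr (1/p)"
  have SA0: "SA \<ge> 0" "SB \<ge> 0" unfolding SA_def SB_def by (auto intro: sum_nonneg)
  have pA: "A powr p = SA" unfolding A_def using SA0 assms(4) by (simp add: powr_powr)
  have pB: "B powr p = SB" unfolding B_def using SA0 assms(4) by (simp add: powr_powr)
  show ?thesis
  proof (cases "A = 0")
    case True
    then have "SA = 0" unfolding A_def by simp
    then have "\<forall>i\<in>S. a i powr p = 0" unfolding SA_def using assms
      by (subst sum_nonneg_eq_0_iff[symmetric]) auto
    then have "\<forall>i\<in>S. a i = 0" by simp
    then show ?thesis by simp
  next
    case An: False
    show ?thesis
    proof (cases "B = 0")
      case True
      then have "SB = 0" unfolding B_def by simp
      then have "\<forall>i\<in>S. b i powr p = 0" unfolding SB_def using assms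
        by (subst sum_nonneg_eq_0_iff[symmetric]) auto
      then have "\<forall>i\<in>S. b i = 0" by simp
      then show ?thesis by simp
    next
      case Bn: False
      have Ap: "A > 0" "B > 0" using An Bn unfolding A_def B_def by auto
      define t where "t = B / (A+B)"
      have t01: "0 \<le> t" "t \<le> 1" "1 - t = A/(A+B)" using Ap unfolding t_def by (auto simp: field_simps)
      have pt: "(a i + b i) powr p \<le> (A+B) powr p * ((1-t) * (a i powr p / SA) + t * (b i powr p / SB))"
        if i: "i \<in> S" for i
      proof -
        have e1: "(1-t)*(a i/A) = a i/(A+B)" using Ap t01(3) by simp
        have e2: "t*(b i/B) = b i/(A+B)" using Ap unfolding t_def by simp
        have eq: "a i + b i = (A+B) * ((1-t)*(a i/A) + t*(b i/B))"
          unfolding e1 e2 using Ap by (simp add: add_divide_distrib[symmetric])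
        have "(a i + b i) powr p = (A+B) powr p * ((1-t)*(a i/A) + t*(b i/B)) powr p"
          unfolding eq using Ap assms(2,3)[OF i] t01 by (simp add: powr_mult)
        also have "\<dots> \<le> (A+B) powr p * ((1-t)*(a i/A) powr p + t*(b i/B) powr p)"
          using cvx[of "a i/A" "b i/B" t p] Ap assms(2,3)[OF i] assms(4) t01
          by (intro mult_left_mono) auto
        also have "(a i/A) powr p = a i powr p / SA" using Ap assms(2)[OF i] pA by (simp add: powr_divide)
        also have "(b i/B) powr p = b i powr p / SB" using Ap assms(3)[OF i] pB by (simp add: powr_divide)
        finally show ?thesis .
      qed
      have SAp: "SA > 0" "SB > 0" using Ap pA pB by auto
      have "(\<Sum>i\<in>S. (a i + b i) powr p) \<le> (\<Sum>i\<in>S. (A+B) powr p * ((1-t) * (a i powr p / SA) + t * (b i powr p / SB)))"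
        by (intro sum_mono pt)
      also have "\<dots> = (A+B) powr p * ((1-t) * (SA/SA) + t * (SB / SB))"
        by (simp add: sum_distrib_left sum.distrib sum_divide_distrib[symmetric] mult.assoc
              SA_def[symmetric] SB_def[symmetric] flip: sum_distrib_left)
      also have "\<dots> = (A+B) powr p" using SAp by simp
      finally have le: "(\<Sum>i\<in>S. (a i + b i) powr p) \<le> (A+B) powr p" .
      have "(\<Sum>i\<in>S. (a i + b i) powr p) powr (1/p) \<le> ((A+B) powr p) powr (1/p)"
        using le assms by (intro powr_mono2) (auto intro!: sum_nonneg)
      also have "\<dots> = A + B" using Ap assms(4) by (simp add: powr_powr)
      finally show ?thesis unfolding A_def B_def SA_def SB_def .
    qed
  qed
qed

theorem mainTheorem19:
  fixes p :: real and n m :: nat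
  assumes "1 \<le> p" and "m \<le> n" and "even (n - m)"
  shows "((\<Sum>i<(n - m) div 2. 2 * real (n choose i) powr p)
          + (\<Sum>i=0..m. (real (m choose i) + real (n choose ((n - m) div 2 + i))) powr p)) powr (1 / p)
         \<le> (\<Sum>i=0..n. real (n choose i) powr p) powr (1 / p)
           + (\<Sum>i=0..m. real (m choose i) powr p) powr (1 / p)"
proof -
  define k where "k = (n - m) div 2"
  obtain q where q: "n - m = 2*q" using assms(3) by blast
  have nk: "n = k + m + k" using assms(2) q unfolding k_def by simp
  define a where "a i = real (n choose i)" for i
  define b where "b i = (if k \<le> i \<and> i \<le> k + m then real (m choose (i - k)) else 0)" for i
  have split: "{0..n} = {..<k} \<union> {k..k+m} \<union> {k+m<..n}" using nk by auto
  have SPLIT: "(\<Sum>i\<in>{0..n}. f i) = (\<Sum>i\<in>{..<k}. f i) + (\<Sum>i\<in>{k..k+m}. f i) + (\<Sum>i\<in>{k+m<..n}. f i)"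
    for f :: "nat \<Rightarrow> real"
    unfolding split by (subst sum.union_disjoint; auto)+
  have rev: "(\<Sum>i\<in>{k+m<..n}. f (n choose i)) = (\<Sum>i\<in>{..<k}. f (n choose i))" for f :: "nat \<Rightarrow> real"
    by (rule sum.reindex_bij_witness[where i="\<lambda>j. n - j" and j="\<lambda>j. n - j"])
       (use nk in \<open>auto simp: binomial_symmetric[symmetric]\<close>)
  have shift: "(\<Sum>i\<in>{k..k+m}. f (i - k)) = (\<Sum>i=0..m. f i)" for f :: "nat \<Rightarrow> real"
    using sum.shift_bounds_cl_nat_ivl[of "\<lambda>i. f (i - k)" 0 k m] by (simp add: add.commute)
  have shift2: "(\<Sum>i\<in>{k..k+m}. f i) = (\<Sum>i=0..m. f (k + i))" for f :: "nat \<Rightarrow> real"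
    using sum.shift_bounds_cl_nat_ivl[of f 0 k m] by (simp add: add.commute)
  have L: "(\<Sum>i\<in>{0..n}. (a i + b i) powr p) =
     (\<Sum>i<k. 2 * real (n choose i) powr p)
          + (\<Sum>i=0..m. (real (m choose i) + real (n choose (k + i))) powr p)"
  proof -
    have "(\<Sum>i\<in>{..<k}. (a i + b i) powr p) = (\<Sum>i<k. real (n choose i) powr p)"
      by (rule sum.cong) (auto simp: a_def b_def)
    moreover have "(\<Sum>i\<in>{k+m<..n}. (a i + b i) powr p) = (\<Sum>i<k. real (n choose i) powr p)"
      by (subst rev[symmetric], rule sum.cong) (auto simp: a_def b_def)
    moreover have "(\<Sum>i\<in>{k..k+m}. (a i + b i) powr p) = (\<Sum>i=0..m. (real (m choose i) + real (n choose (k + i))) powr p)"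
      by (subst shift2, rule sum.cong) (auto simp: a_def b_def add.commute)
    ultimately show ?thesis by (simp add: SPLIT sum.distrib sum_distrib_left)
  qed
  have Bs: "(\<Sum>i\<in>{0..n}. b i powr p) = (\<Sum>i=0..m. real (m choose i) powr p)"
  proof -
    have "(\<Sum>i\<in>{..<k}. b i powr p) = 0" by (rule sum.neutral) (auto simp: b_def)
    moreover have "(\<Sum>i\<in>{k+m<..n}. b i powr p) = 0" by (rule sum.neutral) (auto simp: b_def)
    moreover have "(\<Sum>i\<in>{k..k+m}. b i powr p) = (\<Sum>i\<in>{k..k+m}. real (m choose (i - k)) powr p)"
      by (rule sum.cong) (auto simp: b_def)
    ultimately show ?thesis using shift[of "\<lambda>j. real (m choose j) powr p"] by (simp add: SPLIT)
  qed
  have M: "(\<Sum>i\<in>{0..n}. (a i + b i) powr p) powr (1/p)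
     \<le> (\<Sum>i\<in>{0..n}. a i powr p) powr (1/p) + (\<Sum>i\<in>{0..n}. b i powr p) powr (1/p)"
    by (rule minkowski) (use assms in \<open>auto simp: a_def b_def\<close>)
  show ?thesis using M unfolding L Bs k_def[symmetric] by (simp add: a_def)
qed

end
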